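(* Let $\epsilon>0$ and let $f:\mathbb N\to\mathbb R$ satisfy $f(q)\to\infty$. Then there exist an integer $\gamma>1$ and integers $L_n>1$ with $L_n\to\infty$ such that the rank-one subshift defined by $B_1=0$ and $B_{n+1}=\big((B_n1)^{\gamma}B_n\big)^{L_n}$, with $h_n$ the length of $B_n$, has complexity satisfying $$\limsup_{q\to\infty}\frac{p(q)}{q}<\frac32+\epsilon\quad\text{and}\quad p(h_n)<h_n+f(h_n)\ \text{for all } n\ge2.$$
   Context: For a sequence of finite words $B_n$ over $\{0,1\}$ in which each $B_n$ is a prefix and a subword of $B_{n+1}$, the associated subshift is the set of $x\in\{0,1\}^{\mathbb Z}$ all of whose finite subwords are subwords of some $B_n$; $p(q)$ is the number of distinct words of length $q$ occurring in elements of it. *)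

theory Defs
  imports "HOL-Analysis.Analysis" "HOL-Library.Sublist"
begin

text \<open>blk g L k is the word B_(k+1) of the rank-one construction:
  B_1 = 0, B_(n+1) = ((B_n 1)^g B_n)^(L_n).\<close>
primrec blk :: "nat \<Rightarrow> (nat \<Rightarrow> nat) \<Rightarrow> nat \<Rightarrow> nat list" where
  "blk g L 0 = [0]"
| "blk g L (Suc k) =
     concat (replicate (L (Suc k)) (concat (replicate g (blk g L k @ [1])) @ blk g L k))"

definition rkB :: "nat \<Rightarrow> (nat \<Rightarrow> nat) \<Rightarrow> nat \<Rightarrow> nat list" where
  "rkB g L n = blk g L (n - 1)"   \<comment> \<open>B_n, meaningful for n \<ge> 1\<close>

definition rk_subshift :: "(nat \<Rightarrow> nat list) \<Rightarrow> (int \<Rightarrow> nat) set" where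
  "rk_subshift B = {x. (\<forall>i. x i \<in> {0,1}) \<and>
      (\<forall>i m. \<exists>n\<ge>1. sublist (map (\<lambda>j. x (i + int j)) [0..<m]) (B n))}"

definition complexity :: "(nat \<Rightarrow> nat list) \<Rightarrow> nat \<Rightarrow> nat" where
  "complexity B q = card {w. \<exists>x\<in>rk_subshift B. \<exists>i. w = map (\<lambda>j. x (i + int j)) [0..<q]}"

end

theory Submission
  imports Defs
begin

definition wf :: "(nat \<Rightarrow> 'a) \<Rightarrow> nat \<Rightarrow> nat \<Rightarrow> 'a list" where
  "wf g s q = map (\<lambda>j. g (s+j)) [0..<q]"

lemma wf_cong: "(\<And>j. j < q \<Longrightarrow> g (s+j) = g' (s'+j)) \<Longrightarrow> wf g s q = wf g' s' q"
  unfolding wf_def by simp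

lemma length_wf[simp]: "length (wf g s q) = q"
  by (simp add: wf_def)

lemma sublist_wf:
  assumes "sublist u w"
  shows "\<exists>s. s + length u \<le> length w \<and> u = wf (\<lambda>i. w!i) s (length u)"
proof -
  obtain ps ss where w: "w = ps @ u @ ss" using assms by (auto simp: sublist_def)
  show ?thesis
    by (rule exI[of _ "length ps"]) (auto simp: w wf_def nth_append intro!: nth_equalityI)
qed

lemma wf_mod:
  "wf (\<lambda>i. X ! (i mod P)) s q = wf (\<lambda>i. X ! (i mod P)) (s mod P) q"
  by (rule wf_cong) (simp add: mod_add_left_eq)

lemma nth_concat_replicate:
  "i < n * length X \<Longrightarrow> concat (replicate n X) ! i = X ! (i mod length X)"
proof (induction n arbitrary: i)
  case 0 then show ?case by simp
next
  case (Suc n)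
  show ?case
  proof (cases "i < length X")
    case True then show ?thesis by (simp add: nth_append)
  next
    case False
    then have "i - length X < n * length X" using Suc.prems by simp
    then show ?thesis using False Suc.IH by (simp add: nth_append le_mod_geq)
  qed
qed

lemma card_image_le_bound:
  assumes "S \<subseteq> {a..<b}" shows "card (f ` S) \<le> b - a"
proof -
  have "card (f ` S) \<le> card S" by (rule card_image_le) (rule finite_subset[OF assms], simp)
  also have "\<dots> \<le> card {a..<b}" by (rule card_mono) (simp_all add: assms)
  finally show ?thesis by simp
qed

definition Cw :: "nat \<Rightarrow> nat list \<Rightarrow> nat list" where
  "Cw g A = concat (replicate g (A@[1])) @ A"

locale lev =
  fixes g :: nat and A :: "nat list" and L :: nat
  assumes g1: "g \<ge> 1" and L1: "L \<ge> 1"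
begin

abbreviation "h \<equiv> length A"
definition "C = Cw g A"
definition "c = length C"
definition "B = concat (replicate L C)"
definition "Pf i = (A@[1]) ! (i mod (h+1))"
definition "Cf i = C ! (i mod c)"
definition "W = B @ [1] @ B"

lemma c_eq: "c = g*(h+1) + h"
  by (simp add: c_def C_def Cw_def length_concat sum_list_replicate)

lemma c_pos: "c > 0" using g1 c_eq by simp

lemma length_B: "length B = L * c"
  by (simp add: B_def c_def length_concat sum_list_replicate)

lemma length_W: "length W = (L*c+L*c) + 1"
  by (simp add: W_def length_B)

lemma C_tail: assumes "g*(h+1) \<le> i" "i < c" shows "C ! i = A ! (i - g*(h+1))"
  using assms by (simp add: C_def Cw_def nth_append length_concat sum_list_replicate)

lemma C_nth: assumes "i < c" shows "C ! i = Pf i"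
proof (cases "i < g*(h+1)")
  case True
  then show ?thesis
    by (simp add: C_def Cw_def Pf_def nth_append length_concat sum_list_replicate nth_concat_replicate)
next
  case False
  then obtain r where r: "i = g*(h+1) + r" by (metis le_Suc_ex not_less)
  with assms c_eq have rh: "r < h" by simp
  have "i mod (h+1) = (r + g*(h+1)) mod (h+1)" by (simp only: r add.commute)
  also have "\<dots> = r mod (h+1)" by (rule mod_mult_self1)
  also have "\<dots> = r" using rh by simp
  finally have "i mod (h+1) = r" .
  have "C!i = A!(i - g*(h+1))" using False assms by (intro C_tail) simp_all
  also have "i - g*(h+1) = r" using r by simp
  finally have 1: "C!i = A!r" .
  have "Pf i = A!r" unfolding Pf_def using \<open>i mod (h+1) = r\<close> rh by (simp add: nth_append)
  with 1 show ?thesis by simp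
qed


lemma C_head: assumes "i < h" shows "C ! i = A ! i"
proof -
  have "i < c" using assms c_eq by simp
  then show ?thesis using assms by (simp add: C_nth Pf_def nth_append)
qed

lemma B_nth: "i < L*c \<Longrightarrow> B ! i = Cf i"
  by (simp add: B_def Cf_def nth_concat_replicate c_def)

lemma BB_nth: assumes "i < (L*c+L*c)" shows "(B@B) ! i = Cf i"
proof (cases "i < L*c")
  case True then show ?thesis by (simp add: nth_append length_B B_nth)
next
  case False
  then obtain j where j: "i = L*c + j" by (metis le_Suc_ex not_less)
  with assms have "j < L*c" by simp
  then show ?thesis using j by (simp add: nth_append length_B B_nth Cf_def)
qed

lemma W_lo: "i < L*c \<Longrightarrow> W ! i = Cf i"
  by (simp add: W_def nth_append length_B B_nth)

lemma W_hi: assumes "L*c < i" "i < (L*c+L*c)+1" shows "W ! i = Cf (i - L*c - 1)"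
proof -
  have "i - L*c - 1 < L*c" using assms by simp
  then show ?thesis using assms
    by (simp add: W_def nth_append length_B B_nth Suc_diff_Suc)
qed

lemma Pf_period: "Pf (i + k*(h+1)) = Pf i"
  by (simp only: Pf_def mod_mult_self1)

lemma W_mid: assumes "(L-1)*c \<le> i" "i \<le> L*c + c" shows "W ! i = Pf (i - (L-1)*c)"
proof -
  define M where "M = (L-1)*c"
  have Lc: "L*c = M + c" unfolding M_def using L1 by (cases L) auto
  have cm: "c mod (h+1) = h"
  proof -
    have "c mod (h+1) = (h + g*(h+1)) mod (h+1)" by (simp only: c_eq add.commute)
    also have "\<dots> = h mod (h+1)" by (rule mod_mult_self1)
    finally show ?thesis by simp
  qed
  show ?thesis
  proof (cases "i < L*c")
    case True
    obtain r where r: "i = M + r" using assms(1) unfolding M_def by (metis le_Suc_ex)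
    have rc: "r < c" using True r Lc by simp
    have "W ! i = Cf i" using True by (rule W_lo)
    also have "\<dots> = C ! r" unfolding Cf_def using r rc Lc
      by (metis M_def add.commute mod_less mod_mult_self1)
    also have "\<dots> = Pf r" using rc by (rule C_nth)
    finally show ?thesis using r unfolding M_def[symmetric] by simp
  next
    case False
    show ?thesis
    proof (cases "i = L*c")
      case True
      have "Pf c = 1" using cm by (simp add: Pf_def nth_append)
      moreover have "W ! i = 1" using True by (simp add: W_def nth_append length_B)
      moreover have "i - M = c" using True Lc by simp
      ultimately show ?thesis unfolding M_def[symmetric] by simp
    next
      case False2: False
      with False have gt: "L*c < i" by simp
      then obtain r where r: "i = L*c + 1 + r" by (metis Suc_eq_plus1 add_Suc_right le_Suc_ex less_eq_Suc_le)
      have rc: "r < c" using r assms(2) by simp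
      have "c \<le> L*c" using L1 by simp
      then have "i < (L*c+L*c) + 1" using assms(2) by linarith
      then have "W ! i = Cf (i - L*c - 1)" using gt by (intro W_hi) auto
      also have "i - L*c - 1 = r" using r by simp
      also have "Cf r = C ! r" unfolding Cf_def using rc by simp
      also have "\<dots> = Pf r" using rc by (rule C_nth)
      also have "\<dots> = Pf (r + 1*(g+1)*(h+1))" using Pf_period[of r "g+1"] by simp
      also have "r + 1*(g+1)*(h+1) = i - M" using r Lc c_eq by simp
      finally show ?thesis unfolding M_def[symmetric] .
    qed
  qed
qed

definition "Tset q = (\<lambda>s. wf Pf s q) ` {..<h+1}"
definition "Cset q = (\<lambda>s. wf Cf s q) ` {..<c}"
definition "Jset q = (\<lambda>s. wf Cf s q) ` {s. s < c \<and> c < s+q}"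
definition "Sp q = (\<lambda>s. wf (\<lambda>i. W!i) s q) ` {s. s \<le> L*c \<and> L*c < s + q}"
definition "Xset q = (\<lambda>s. wf (\<lambda>i. W!i) s q) `
   ({s. L*c < s+q \<and> s < L*c - c} \<union> {s. s \<le> L*c \<and> L*c + c + 1 < s + q})"
definition "Lang q = {u. length u = q \<and> (sublist u (B@B) \<or> sublist u W)}"

lemma Pf_T: "wf Pf s q \<in> Tset q"
proof -
  have "wf Pf s q = wf Pf (s mod (h+1)) q" unfolding Pf_def by (rule wf_mod)
  then show ?thesis unfolding Tset_def by auto
qed

lemma Cf_mod: "wf Cf s q = wf Cf (s mod c) q" unfolding Cf_def by (rule wf_mod)

lemma Cf_C: "wf Cf s q \<in> Cset q" unfolding Cset_def by (rule image_eqI[of _ _ "s mod c"], rule Cf_mod, simp add: c_pos)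

lemma Cf_TJ: "wf Cf s q \<in> Tset q \<union> Jset q"
proof -
  let ?s = "s mod c"
  have sc: "?s < c" using c_pos by simp
  show ?thesis
  proof (cases "?s + q \<le> c")
    case True
    have "wf Cf ?s q = wf Pf ?s q"
    proof (rule wf_cong)
      fix j assume "j < q"
      then have "?s + j < c" using True by simp
      then show "Cf (?s + j) = Pf (?s + j)" by (simp add: Cf_def C_nth)
    qed
    then show ?thesis using Cf_mod Pf_T by auto
  next
    case False
    then have "wf Cf ?s q \<in> Jset q" unfolding Jset_def using sc by auto
    then show ?thesis using Cf_mod by auto
  qed
qed

lemma Lang_cases:
  assumes "u \<in> Lang q"
  shows "(\<exists>s. u = wf Cf s q) \<or> (\<exists>s. s \<le> L*c \<and> L*c < s+q \<and> s + q \<le> (L*c+L*c)+1 \<and> u = wf (\<lambda>i. W!i) s q)"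
proof -
  from assms have lu: "length u = q" and sub: "sublist u (B@B) \<or> sublist u W" unfolding Lang_def by auto
  from sub show ?thesis
  proof
    assume "sublist u (B@B)"
    from sublist_wf[OF this] obtain s where s: "s + q \<le> (L*c+L*c)" "u = wf (\<lambda>i. (B@B)!i) s q"
      using lu length_B by auto
    have "wf (\<lambda>i. (B@B)!i) s q = wf Cf s q" by (rule wf_cong) (use s(1) in \<open>simp add: BB_nth\<close>)
    then show ?thesis using s by auto
  next
    assume "sublist u W"
    from sublist_wf[OF this] obtain s where s: "s + q \<le> (L*c+L*c)+1" "u = wf (\<lambda>i. W!i) s q"
      using lu length_W by auto
    show ?thesis
    proof (cases "s + q \<le> L*c")
      case True
      have "wf (\<lambda>i. W!i) s q = wf Cf s q" by (rule wf_cong) (use True in \<open>simp add: W_lo\<close>)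
      then show ?thesis using s by auto
    next
      case F1: False
      show ?thesis
      proof (cases "L*c < s")
        case True
        have "wf (\<lambda>i. W!i) s q = wf Cf (s - L*c - 1) q"
        proof (rule wf_cong)
          fix j assume "j < q"
          then have "W!(s+j) = Cf (s + j - L*c - 1)" using True s(1) by (intro W_hi) auto
          then show "W!(s+j) = Cf (s - L*c - 1 + j)" using True by simp
        qed
        then show ?thesis using s by auto
      next
        case False
        then have "s \<le> L*c" "L*c < s+q" using F1 by auto
        then show ?thesis using s by blast
      qed
    qed
  qed
qed

lemma Sp_TX:
  assumes "s \<le> L*c" "L*c < s+q" "s + q \<le> (L*c+L*c)+1"
  shows "wf (\<lambda>i. W!i) s q \<in> Tset q \<union> Xset q"
proof (cases "(L-1)*c \<le> s \<and> s + q \<le> L*c + c + 1")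
  case True
  have "wf (\<lambda>i. W!i) s q = wf Pf (s - (L-1)*c) q"
  proof (rule wf_cong)
    fix j assume "j < q"
    then have "W!(s+j) = Pf (s + j - (L-1)*c)" using True by (intro W_mid) auto
    then show "W!(s+j) = Pf (s - (L-1)*c + j)" using True by simp
  qed
  then show ?thesis using Pf_T by auto
next
  case False
  have "L*c - c = (L-1)*c" by (simp add: diff_mult_distrib)
  then have "s \<in> {s. L*c < s+q \<and> s < L*c - c} \<union> {s. s \<le> L*c \<and> L*c + c + 1 < s + q}"
    using False assms by auto
  then show ?thesis unfolding Xset_def by blast
qed

lemma cover1: "Lang q \<subseteq> Cset q \<union> Sp q"
proof
  fix u assume "u \<in> Lang q"
  from Lang_cases[OF this] show "u \<in> Cset q \<union> Sp q"
    using Cf_C unfolding Sp_def by blast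
qed

lemma cover2: "Lang q \<subseteq> Tset q \<union> Jset q \<union> Xset q"
proof
  fix u assume "u \<in> Lang q"
  from Lang_cases[OF this] show "u \<in> Tset q \<union> Jset q \<union> Xset q"
    using Cf_TJ Sp_TX by blast
qed

lemma finite_sets: "finite (Tset q)" "finite (Cset q)" "finite (Jset q)" "finite (Sp q)" "finite (Xset q)"
proof -
  show "finite (Tset q)" "finite (Cset q)" unfolding Tset_def Cset_def by auto
  show "finite (Jset q)" unfolding Jset_def by (rule finite_imageI, rule finite_subset[of _ "{..<c}"]) auto
  show "finite (Sp q)" unfolding Sp_def by (rule finite_imageI, rule finite_subset[of _ "{..L*c}"]) auto
  show "finite (Xset q)" unfolding Xset_def by (rule finite_imageI, rule finite_subset[of _ "{..L*c}"]) auto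
qed

lemma card_T: "card (Tset q) \<le> h+1"
  unfolding Tset_def by (rule order_trans[OF card_image_le]) auto
lemma card_C: "card (Cset q) \<le> c"
  unfolding Cset_def by (rule order_trans[OF card_image_le]) auto
lemma card_J1: "card (Jset q) \<le> q - 1"
  unfolding Jset_def by (rule order_trans[OF card_image_le_bound[of _ "c - (q-1)" c]]) auto
lemma card_J2: "card (Jset q) \<le> c"
  unfolding Jset_def by (rule order_trans[OF card_image_le_bound[of _ 0 c]]) auto
lemma card_Sp: "card (Sp q) \<le> q"
  unfolding Sp_def by (rule order_trans[OF card_image_le_bound[of _ "L*c + 1 - q" "L*c+1"]]) auto
lemma card_le_interval:
  assumes "S \<subseteq> {a..<b}" "b - a \<le> N" shows "card (f ` S) \<le> N"
  using card_image_le_bound[OF assms(1), of f] assms(2) by simp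

lemma card_X: "card (Xset q) \<le> 2*(q-c-1)"
proof -
  let ?f = "\<lambda>s. wf (\<lambda>i. W!i) s q"
  define M where "M = L*c"
  define S1 where "S1 = {s. M < s+q \<and> s < M - c}"
  define S2 where "S2 = {s. s \<le> M \<and> M + c + 1 < s + q}"
  have "Xset q = ?f ` S1 \<union> ?f ` S2"
    unfolding Xset_def S1_def S2_def M_def by (simp only: image_Un)
  then have "card (Xset q) \<le> card (?f ` S1) + card (?f ` S2)"
    by (simp only: card_Un_le)
  moreover have "card (?f ` S1) \<le> q-c-1"
  proof (rule card_le_interval)
    show "S1 \<subseteq> {M + 1 - q..<M - c}"
    proof
      fix s assume "s \<in> S1"
      then have "M < s+q" "s < M - c" unfolding S1_def by auto
      then show "s \<in> {M + 1 - q..<M - c}" by simp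
    qed
    show "M - c - (M + 1 - q) \<le> q - c - 1" by arith
  qed
  moreover have "card (?f ` S2) \<le> q-c-1"
  proof (rule card_le_interval)
    show "S2 \<subseteq> {M + c + 2 - q..<M+1}"
    proof
      fix s assume "s \<in> S2"
      then have "s \<le> M" "M + c + 1 < s + q" unfolding S2_def by auto
      then show "s \<in> {M + c + 2 - q..<M+1}" by simp
    qed
    show "M + 1 - (M + c + 2 - q) \<le> q - c - 1" by arith
  qed
  ultimately show ?thesis by simp
qed

lemma finite_Lang: "finite (Lang q)"
  using cover1 finite_sets by (meson finite_Un finite_subset)

lemma bound1: "card (Lang q) \<le> c + q"
proof -
  have "card (Lang q) \<le> card (Cset q \<union> Sp q)" using cover1 finite_sets by (intro card_mono) auto
  also have "\<dots> \<le> card (Cset q) + card (Sp q)" by (rule card_Un_le)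
  finally show ?thesis using card_C[of q] card_Sp[of q] by linarith
qed

lemma bound2: "card (Lang q) \<le> (h+1) + card (Jset q) + 2*(q-c-1)"
proof -
  have "card (Lang q) \<le> card (Tset q \<union> Jset q \<union> Xset q)" using cover2 finite_sets by (intro card_mono) auto
  also have "\<dots> \<le> card (Tset q \<union> Jset q) + card (Xset q)" by (rule card_Un_le)
  also have "\<dots> \<le> card (Tset q) + card (Jset q) + card (Xset q)" using card_Un_le by simp
  finally show ?thesis using card_T[of q] card_X[of q] by linarith
qed

lemma Cf_AA: assumes "c - h \<le> i" "i < c + h" shows "Cf i = (A@A) ! (i - (c-h))"
proof -
  have ch: "c - h = g*(h+1)" using c_eq by simp
  show ?thesis
  proof (cases "i < c")
    case True
    then have "Cf i = C ! i" by (simp add: Cf_def)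
    also have "\<dots> = A ! (i - g*(h+1))" using True assms ch by (intro C_tail) auto
    also have "\<dots> = (A@A) ! (i - (c-h))" using True ch c_eq by (simp add: nth_append)
    finally show ?thesis .
  next
    case False
    then obtain r where r: "i = c + r" by (metis le_Suc_ex not_less)
    with assms have rh: "r < h" by simp
    have "i mod c = r" using r rh c_eq by simp
    then have "Cf i = C ! r" by (simp add: Cf_def)
    also have "\<dots> = A ! r" using rh by (rule C_head)
    also have "\<dots> = (A@A) ! (i - (c-h))"
    proof -
      have "i - (c-h) = h + r" using r c_eq by simp
      then show ?thesis by (simp add: nth_append)
    qed
    finally show ?thesis .
  qed
qed

lemma card_J3:
  assumes A: "A = concat (replicate L' D)" and L': "L' \<ge> 1" and D: "D \<noteq> []"
  shows "card (Jset q) \<le> length D + 2*(q-h-1)"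
proof -
  let ?d = "length D"
  let ?Df = "\<lambda>i. D ! (i mod ?d)"
  define AS where "AS = (\<lambda>s. wf ?Df s q) ` {..<?d}"
  define Jl where "Jl = (\<lambda>s. wf Cf s q) ` {s. s<c \<and> c<s+q \<and> s < c-h}"
  define Jr where "Jr = (\<lambda>s. wf Cf s q) ` {s. s<c \<and> c+h < s+q}"
  have hd: "h = L' * ?d" using A by (simp add: length_concat sum_list_replicate)
  have AA: "A @ A = concat (replicate (L'+L') D)" using A by (simp add: replicate_add)
  have sub: "Jset q \<subseteq> AS \<union> Jl \<union> Jr"
  proof
    fix u assume "u \<in> Jset q"
    then obtain s where s: "s < c" "c < s+q" "u = wf Cf s q" unfolding Jset_def by auto
    show "u \<in> AS \<union> Jl \<union> Jr"
    proof (cases "s < c - h \<or> c + h < s + q")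
      case True then show ?thesis using s unfolding Jl_def Jr_def by auto
    next
      case False
      have "wf Cf s q = wf ?Df (s - (c-h)) q"
      proof (rule wf_cong)
        fix j assume j: "j < q"
        have "Cf (s+j) = (A@A) ! (s + j - (c-h))" using False j by (intro Cf_AA) auto
        also have "\<dots> = ?Df (s + j - (c-h))"
        proof -
          have hc: "h \<le> c" using c_eq by simp
          have "s + j < c + h" "c - h \<le> s + j" using False j by auto
          moreover have "(L'+L') * ?d = h + h" using hd by (simp add: algebra_simps)
          ultimately have "s + j - (c-h) < (L'+L') * ?d" using hc by arith
          then show ?thesis unfolding AA by (rule nth_concat_replicate)
        qed
        also have "s + j - (c-h) = s - (c-h) + j" using False by auto
        finally show "Cf (s+j) = ?Df (s - (c-h) + j)" .
      qed
      also have "\<dots> = wf ?Df ((s - (c-h)) mod ?d) q" by (rule wf_mod)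
      finally have "u = wf ?Df ((s - (c-h)) mod ?d) q" using s by simp
      moreover have "(s - (c-h)) mod ?d < ?d" using D by simp
      ultimately show ?thesis unfolding AS_def by blast
    qed
  qed
  have fin: "finite AS" "finite Jl" "finite Jr" unfolding AS_def Jl_def Jr_def by auto
  have "card (Jset q) \<le> card (AS \<union> Jl \<union> Jr)" using sub fin by (intro card_mono) auto
  also have "\<dots> \<le> card AS + card Jl + card Jr" using card_Un_le
    by (metis (no_types, lifting) add_le_mono1 order_trans)
  also have "card AS \<le> ?d" unfolding AS_def by (rule order_trans[OF card_image_le]) auto
  also have "card Jl \<le> q - h - 1"
    unfolding Jl_def by (rule order_trans[OF card_image_le_bound[of _ "c - (q-1)" "c-h"]]) auto
  also have "card Jr \<le> q - h - 1"
    unfolding Jr_def by (rule order_trans[OF card_image_le_bound[of _ "c + h + 1 - q" c]]) auto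
  finally show ?thesis by simp
qed

end

lemma sub_td: assumes "sublist u w" shows "\<exists>s. u = take (length u) (drop s w) \<and> s + length u \<le> length w"
proof -
  obtain ps ss where w: "w = ps @ u @ ss" using assms by (auto simp: sublist_def)
  show ?thesis by (rule exI[of _ "length ps"]) (simp add: w)
qed

lemma td_sub: "sublist (take n (drop s w)) w"
  by (rule sublist_order.order.trans[OF sublist_take sublist_drop])

fun gw :: "nat list \<Rightarrow> nat list list \<Rightarrow> nat list" where
  "gw X [] = X"
| "gw X (g#gs) = X @ g @ gw X gs"

definition "GS X = {w. \<exists>gs. set gs \<subseteq> {[],[1]} \<and> w = gw X gs}"

lemma gw_append: "gw X (gs @ g # gs') = gw X gs @ g @ gw X gs'"
  by (induction gs) auto

lemma prefix_gw: "\<exists>R. gw X gs = X @ R"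
  by (cases gs) auto

lemma GS_join:
  assumes "w1 \<in> GS X" "w2 \<in> GS X" "g \<in> {[],[1]}" shows "w1 @ g @ w2 \<in> GS X"
proof -
  obtain gs1 gs2 where "set gs1 \<subseteq> {[],[1]}" "w1 = gw X gs1" "set gs2 \<subseteq> {[],[1]}" "w2 = gw X gs2"
    using assms(1,2) unfolding GS_def by auto
  then show ?thesis unfolding GS_def using assms(3)
    by (intro CollectI exI[of _ "gs1 @ g # gs2"]) (simp add: gw_append)
qed

lemma GS_base: "X \<in> GS X"
  unfolding GS_def by (auto intro!: exI[of _ "[]"])

lemma GS_R1: "Y \<in> GS X \<Longrightarrow> concat (replicate n (Y@[1])) @ Y \<in> GS X"
proof (induction n)
  case 0 then show ?case by simp
next
  case (Suc n)
  then have "Y @ [1] @ (concat (replicate n (Y@[1])) @ Y) \<in> GS X" by (intro GS_join) auto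
  then show ?case by simp
qed

lemma GS_R2: "Z \<in> GS X \<Longrightarrow> n \<ge> 1 \<Longrightarrow> concat (replicate n Z) \<in> GS X"
proof (induction n)
  case 0 then show ?case by simp
next
  case (Suc n)
  show ?case
  proof (cases "n = 0")
    case True then show ?thesis using Suc by simp
  next
    case False
    then have "Z @ [] @ concat (replicate n Z) \<in> GS X" using Suc by (intro GS_join) auto
    then show ?thesis by simp
  qed
qed

lemma ok_gap:
  assumes "sublist u (X @ g @ X)" "g \<in> {[],[1]}"
  shows "sublist u (X@X) \<or> sublist u (X@[1]@X)"
  using assms by auto

lemma gw_sub:
  "set gs \<subseteq> {[],[1]} \<Longrightarrow> sublist u (gw X gs) \<Longrightarrow> length u \<le> length X + 1 \<Longrightarrow>
   sublist u (X@X) \<or> sublist u (X@[1]@X)"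
proof (induction gs)
  case Nil
  then have "sublist u X" by simp
  then show ?case by (meson sublist_append_rightI sublist_order.order.trans)
next
  case (Cons g gs)
  let ?n = "length u"
  obtain s where s: "u = take ?n (drop s (X @ g @ gw X gs))" "s + ?n \<le> length (X @ g @ gw X gs)"
    using sub_td[of u "gw X (g#gs)"] Cons.prems by auto
  have g: "g \<in> {[],[1]}" using Cons.prems by auto
  show ?case
  proof (cases "length X + length g \<le> s")
    case True
    then have "u = take ?n (drop (s - (length X + length g)) (gw X gs))" using s(1) by simp
    then have "sublist u (gw X gs)" using td_sub by metis
    then show ?thesis using Cons by auto
  next
    case False
    obtain R where R: "gw X gs = X @ R" using prefix_gw by blast
    have "X @ g @ gw X gs = (X @ g @ X) @ R" using R by simp
    moreover have "s + ?n \<le> length (X @ g @ X)" using False Cons.prems(3) by simp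
    ultimately have "u = take ?n (drop s (X @ g @ X))" using s(1) by simp
    then have "sublist u (X @ g @ X)" using td_sub by metis
    then show ?thesis using g by (rule ok_gap)
  qed
qed

lemma blk_Suc: "blk g L (Suc k) = concat (replicate (L (Suc k)) (Cw g (blk g L k)))"
  by (simp add: Cw_def)

lemma blk_GS:
  assumes L: "\<forall>j. L j \<ge> 1" and "j \<le> m"
  shows "blk g L m \<in> GS (blk g L j)"
  using assms(2)
proof (induction m rule: dec_induct)
  case base then show ?case by (rule GS_base)
next
  case (step m)
  have "Cw g (blk g L m) \<in> GS (blk g L j)" unfolding Cw_def using step.IH by (rule GS_R1)
  then show ?case unfolding blk_Suc using L by (intro GS_R2) auto
qed

lemma sublist_blk_mono:
  assumes L: "\<forall>j. L j \<ge> 1" and "j \<le> m"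
  shows "sublist (blk g L j) (blk g L m)"
  using assms(2)
proof (induction m rule: dec_induct)
  case base then show ?case by simp
next
  case (step m)
  obtain n where n: "L (Suc m) = Suc n" using L by (metis not0_implies_Suc not_one_le_zero)
  have "sublist (blk g L m) (Cw g (blk g L m))" unfolding Cw_def by simp
  also have "sublist (Cw g (blk g L m)) (blk g L (Suc m))" unfolding blk_Suc n by simp
  finally show ?case using step.IH by (meson sublist_order.order.trans)
qed

lemma reduce:
  assumes L: "\<forall>j. L j \<ge> 1" and sub: "sublist u (blk g L m)"
    and len: "length u \<le> length (blk g L j) + 1"
  shows "sublist u (blk g L j @ blk g L j) \<or> sublist u (blk g L j @ [1] @ blk g L j)"
proof (cases "m \<le> j")
  case True
  then have "sublist u (blk g L j)" using sublist_blk_mono[OF L True] sub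
    by (meson sublist_order.order.trans)
  then show ?thesis by (meson sublist_append_rightI sublist_order.order.trans)
next
  case False
  then have "blk g L m \<in> GS (blk g L j)" using blk_GS[OF L] by simp
  then obtain gs where "set gs \<subseteq> {[],[1]}" "blk g L m = gw (blk g L j) gs" unfolding GS_def by auto
  then show ?thesis using gw_sub sub len by metis
qed


lemma length_Cw: "length (Cw g A) = g*(length A + 1) + length A"
  by (simp add: Cw_def length_concat sum_list_replicate)

lemma cx_le:
  assumes L: "\<forall>j. L j \<ge> 1" and g: "g \<ge> 1" and q: "q \<le> length (blk g L (Suc k)) + 1"
  shows "complexity (rkB g L) q \<le> card (lev.Lang g (blk g L k) (L (Suc k)) q)"
proof -
  interpret lev g "blk g L k" "L (Suc k)" using L g by unfold_locales auto
  have BB: "B = blk g L (Suc k)" unfolding B_def C_def blk_Suc ..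
  have sub: "{w. \<exists>x\<in>rk_subshift (rkB g L). \<exists>i. w = map (\<lambda>j. x (i + int j)) [0..<q]} \<subseteq> Lang q"
  proof
    fix w assume "w \<in> {w. \<exists>x\<in>rk_subshift (rkB g L). \<exists>i. w = map (\<lambda>j. x (i + int j)) [0..<q]}"
    then obtain x i where x: "x \<in> rk_subshift (rkB g L)" and w: "w = map (\<lambda>j. x (i + int j)) [0..<q]"
      by auto
    from x obtain n where "n \<ge> 1" "sublist w (rkB g L n)" unfolding rk_subshift_def w by blast
    then have s: "sublist w (blk g L (n-1))" by (simp add: rkB_def)
    have lw: "length w = q" using w by simp
    then have "sublist w (B@B) \<or> sublist w (B@[1]@B)" using reduce[OF L s, of "Suc k"] q BB by simp
    then show "w \<in> Lang q" unfolding Lang_def W_def using lw by auto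
  qed
  show ?thesis unfolding complexity_def by (rule card_mono[OF finite_Lang sub])
qed

lemma level_bounds:
  assumes L: "\<forall>j. L j \<ge> 1" and g: "g \<ge> 1" and q: "q \<le> length (blk g L (Suc k)) + 1"
    and hk: "hk = length (blk g L k)" and ck: "ck = g*(hk+1) + hk"
  shows "complexity (rkB g L) q \<le> ck + q"
    and "complexity (rkB g L) q \<le> (hk+1) + (q-1) + 2*(q-ck-1)"
    and "complexity (rkB g L) q \<le> (hk+1) + ck + 2*(q-ck-1)"
    and "k \<ge> 1 \<Longrightarrow> complexity (rkB g L) q \<le>
           (hk+1) + (g*(length (blk g L (k-1))+1) + length (blk g L (k-1))) + 2*(q-hk-1) + 2*(q-ck-1)"
proof -
  interpret lev g "blk g L k" "L (Suc k)" using L g by unfold_locales auto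
  have cc: "c = ck" using c_eq hk ck by simp
  have P: "complexity (rkB g L) q \<le> card (Lang q)" by (rule cx_le[OF L g q])
  show "complexity (rkB g L) q \<le> ck + q" using P bound1[of q] cc by simp
  show "complexity (rkB g L) q \<le> (hk+1) + (q-1) + 2*(q-ck-1)"
    using P bound2[of q] card_J1[of q] cc hk by simp
  show "complexity (rkB g L) q \<le> (hk+1) + ck + 2*(q-ck-1)"
    using P bound2[of q] card_J2[of q] cc hk by simp
  assume k: "k \<ge> 1"
  then obtain k' where k': "k = Suc k'" by (cases k) auto
  let ?D = "Cw g (blk g L k')"
  have A: "blk g L k = concat (replicate (L k) ?D)" unfolding k' blk_Suc ..
  have lD: "length ?D = g*(length (blk g L (k-1))+1) + length (blk g L (k-1))"
    unfolding k' by (simp add: length_Cw)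
  have "length ?D > 0" using g by (simp add: length_Cw)
  then have D: "?D \<noteq> []" by auto
  have J: "card (Jset q) \<le> length ?D + 2*(q-hk-1)"
    using card_J3[OF A _ D, of q] L hk by simp
  have b2: "card (Lang q) \<le> (hk+1) + card (Jset q) + 2*(q-ck-1)"
    using bound2[of q] cc hk by simp
  show "complexity (rkB g L) q \<le>
           (hk+1) + (g*(length (blk g L (k-1))+1) + length (blk g L (k-1))) + 2*(q-hk-1) + 2*(q-ck-1)"
    using P b2 J lD by linarith
qed


lemma alg3:
  fixes P q h c g :: real
  assumes a: "P \<le> c + q" and b: "P + c + 1 \<le> 2*q + h" and c: "c = g*(h+1)+h"
    and h: "h \<ge> 0" and g: "g \<ge> 0" and P0: "P \<ge> 0"
  shows "P \<le> (3/2 + 1/(2*(2*g+1))) * q"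
proof -
  have ch: "c \<ge> h" using c h g by simp
  have 1: "(c - h + 1) * P \<le> (c-h+1)*(c+q)" using a ch by (intro mult_left_mono) auto
  have 2: "c * P \<le> c*(2*q + h - c - 1)" using b ch h by (intro mult_left_mono) auto
  have eq: "(c-h+1)*(c+q) + c*(2*q+h-c-1) = q*(3*c-h+1)" by (simp add: algebra_simps)
  have "(2*c-h+1) * P = (c - h + 1) * P + c * P" by (simp add: algebra_simps)
  also have "\<dots> \<le> q*(3*c-h+1)" using 1 2 eq by linarith
  finally have 3: "(2*c-h+1) * P \<le> q*(3*c-h+1)" .
  have e1: "2*c-h+1 = (2*g+1)*(h+1)" using c by (simp add: algebra_simps)
  have e2: "3*c-h+1 = (3*g+2)*(h+1) - 1" using c by (simp add: algebra_simps)
  have q0: "q \<ge> 0" using a b ch P0 by linarith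
  from 3 have 4: "(2*g+1)*(h+1)*P \<le> q*((3*g+2)*(h+1) - 1)" by (simp only: e1 e2)
  have 5: "q*((3*g+2)*(h+1) - 1) \<le> q*((3*g+2)*(h+1))" using q0 by (intro mult_left_mono) auto
  have eqA: "(h+1)*((2*g+1)*P) = (2*g+1)*(h+1)*P" by (simp add: algebra_simps)
  have eqB: "(h+1)*((3*g+2)*q) = q*((3*g+2)*(h+1))" by (simp add: algebra_simps)
  have "(h+1)*((2*g+1) * P) \<le> (h+1)*((3*g+2)*q)" using 4 5 eqA eqB by linarith
  then have "(2*g+1) * P \<le> (3*g+2)*q" using h by (simp add: mult_le_cancel_left_pos)
  moreover have "(3/2 + 1/(2*(2*g+1))) = (3*g+2)/(2*g+1)" using g by (simp add: field_simps)
  ultimately show ?thesis using g by (simp add: field_simps)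
qed

lemma alg1:
  fixes P q h d Lk :: real
  assumes a: "P \<le> h + q" and b: "2*P \<le> 3*q + d" and hd: "h = Lk * d" and Lk: "Lk \<ge> 1"
    and hq: "h < q" and d: "d \<ge> 0"
  shows "P \<le> (3/2 + 1/(2*Lk)) * q"
proof -
  have "d = h / Lk" using hd Lk by simp
  also have "\<dots> \<le> q / Lk" using hq Lk by (intro divide_right_mono) auto
  finally have "d \<le> q / Lk" .
  then have "2*P \<le> 3*q + q/Lk" using b by linarith
  then show ?thesis using Lk by (simp add: field_simps)
qed


lemma ratio_level:
  assumes L: "\<forall>j. L j \<ge> 1" and g: "g \<ge> 1" and k: "k \<ge> 1"
    and q1: "length (blk g L k) + 1 < q" and q2: "q \<le> length (blk g L (Suc k)) + 1"
  shows "real (complexity (rkB g L) q) \<le> (3/2 + 1/(2*real (L k)) + 1/(2*(2*real g+1))) * real q"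
proof -
  define hk where "hk = length (blk g L k)"
  define ck where "ck = g*(hk+1)+hk"
  define d where "d = g*(length (blk g L (k-1))+1) + length (blk g L (k-1))"
  define P where "P = complexity (rkB g L) q"
  note B = level_bounds[OF L g q2 hk_def ck_def]
  have b1: "P \<le> ck + q" and b2: "P \<le> (hk+1) + (q-1) + 2*(q-ck-1)" and b3: "P \<le> (hk+1) + ck + 2*(q-ck-1)"
     and b4: "P \<le> (hk+1) + d + 2*(q-hk-1) + 2*(q-ck-1)" using B k unfolding P_def d_def by auto
  obtain k' where k': "k = Suc k'" using k by (cases k) auto
  have hd: "hk = L k * d" unfolding hk_def d_def k' blk_Suc
    by (simp add: length_concat sum_list_replicate length_Cw)
  have Lk: "real (L k) \<ge> 1" using L by simp
  have x1: "0 \<le> 1/(2*real (L k))" and x2: "0 \<le> 1/(2*(2*real g+1))" by auto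
  have q1': "hk + 1 < q" using q1 hk_def by simp
  have "1*(hk+1) \<le> g*(hk+1)" using g by (intro mult_le_mono1)
  then have ckh: "2*hk + 1 \<le> ck" using ck_def by simp
  consider (I) "q \<le> 2*hk" | (II) "2*hk < q" "q \<le> ck" | (III) "ck < q" by linarith
  then show ?thesis
  proof cases
    case I
    then have qc: "q \<le> ck" using ckh by simp
    have n1: "P \<le> hk + q" using b2 q1' qc by arith
    have n2: "P + hk + 1 \<le> 2*q + d" using b4 q1' qc by arith
    have r1: "real P \<le> real hk + real q" using n1 by linarith
    have r2: "2 * real P \<le> 3 * real q + real d" using n1 n2 by linarith
    have "real P \<le> (3/2 + 1/(2*real (L k))) * real q"
    proof (rule alg1[OF r1 r2 _ Lk])
      show "real hk = real (L k) * real d" using hd by simp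
      show "real hk < real q" using q1' by simp
    qed simp
    moreover have "0 \<le> 1/(2*(2*real g+1)) * real q" by simp
    moreover have "(3/2 + 1/(2*real (L k)) + 1/(2*(2*real g+1))) * real q =
      3/2 * real q + 1/(2*real (L k)) * real q + 1/(2*(2*real g+1)) * real q" by (simp add: distrib_right)
    ultimately show ?thesis unfolding P_def by (simp only: distrib_right)
  next
    case II
    have n1: "P \<le> hk + q" using b2 q1' II by arith
    then have "real P \<le> 3/2 * real q" using II by linarith
    moreover have "0 \<le> 1/(2*real (L k)) * real q" "0 \<le> 1/(2*(2*real g+1)) * real q" by simp_all
    moreover have "(3/2 + 1/(2*real (L k)) + 1/(2*(2*real g+1))) * real q =
      3/2 * real q + 1/(2*real (L k)) * real q + 1/(2*(2*real g+1)) * real q" by (simp add: distrib_right)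
    ultimately show ?thesis unfolding P_def by (simp only: distrib_right)
  next
    case III
    have n2: "P + ck + 1 \<le> 2*q + hk" using b3 III by arith
    have "real P \<le> (3/2 + 1/(2*(2*real g+1))) * real q"
    proof (rule alg3)
      show "real P \<le> real ck + real q" using b1 by linarith
      show "real P + real ck + 1 \<le> 2 * real q + real hk" using n2 by linarith
      show "real ck = real g * (real hk + 1) + real hk" using ck_def by (simp add: algebra_simps)
    qed auto
    moreover have "0 \<le> 1/(2*real (L k)) * real q" by simp
    moreover have "(3/2 + 1/(2*real (L k)) + 1/(2*(2*real g+1))) * real q =
      3/2 * real q + 1/(2*real (L k)) * real q + 1/(2*(2*real g+1)) * real q" by (simp add: distrib_right)
    ultimately show ?thesis unfolding P_def by (simp only: distrib_right)
  qed
qed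


definition Msel :: "(nat \<Rightarrow> real) \<Rightarrow> nat \<Rightarrow> nat" where
  "Msel f b = (SOME M. \<forall>m\<ge>M. f m > real b)"

lemma Msel:
  assumes "filterlim f at_top sequentially" "m \<ge> Msel f b" shows "f m > real b"
proof -
  have "eventually (\<lambda>m. f m \<ge> real b + 1) sequentially" using assms(1) filterlim_at_top by blast
  then obtain N where N: "\<forall>m\<ge>N. f m \<ge> real b + 1" by (auto simp: eventually_sequentially)
  have "\<exists>M. \<forall>m\<ge>M. f m > real b"
  proof (intro exI allI impI)
    fix m assume "m \<ge> N" then show "f m > real b" using N by force
  qed
  from someI_ex[OF this] show ?thesis using assms(2) unfolding Msel_def by blast
qed

primrec hh :: "nat \<Rightarrow> (nat \<Rightarrow> real) \<Rightarrow> nat \<Rightarrow> nat" where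
  "hh g f 0 = 1"
| "hh g f (Suc j) = max (j+2) (Msel f (g*(hh g f j+1) + hh g f j)) * (g*(hh g f j+1) + hh g f j)"

definition LL :: "nat \<Rightarrow> (nat \<Rightarrow> real) \<Rightarrow> nat \<Rightarrow> nat" where
  "LL g f n = (case n of 0 \<Rightarrow> 2 | Suc j \<Rightarrow> max (j+2) (Msel f (g*(hh g f j+1) + hh g f j)))"

lemma LL_Suc: "LL g f (Suc j) = max (j+2) (Msel f (g*(hh g f j+1) + hh g f j))"
  by (simp add: LL_def)

lemma LL_ge: "LL g f n \<ge> n + 1"
  by (cases n) (auto simp: LL_def)

lemma len_blk: "length (blk g (LL g f) j) = hh g f j"
  by (induction j) (simp_all add: blk_Suc length_concat sum_list_replicate length_Cw LL_Suc)

lemma hh_strict: assumes "g \<ge> 1" shows "strict_mono (hh g f)"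
proof (rule strict_mono_Suc_iff[THEN iffD2], intro allI)
  fix j
  let ?c = "g*(hh g f j+1) + hh g f j"
  have m1: "1 \<le> max (j+2) (Msel f ?c)" by (simp add: le_max_iff_disj)
  have "hh g f j < ?c" using assms by simp
  also have "?c \<le> max (j+2) (Msel f ?c) * ?c" using mult_le_mono1[OF m1, of ?c] by simp
  finally show "hh g f j < hh g f (Suc j)" by simp
qed

lemma find_level:
  assumes H: "strict_mono (H::nat \<Rightarrow> nat)" and q: "H K + 1 < q"
  shows "\<exists>k\<ge>K. H k + 1 < q \<and> q \<le> H (Suc k) + 1"
proof -
  define S where "S = {j. H j + 1 < q}"
  have "S \<subseteq> {..q}"
  proof
    fix x assume "x \<in> S"
    then have "H x + 1 < q" unfolding S_def by simp
    moreover have "x \<le> H x" using seq_suble[OF H] .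
    ultimately show "x \<in> {..q}" by simp
  qed
  then have fin: "finite S" by (rule finite_subset) simp
  have KS: "K \<in> S" using q S_def by simp
  define k where "k = Max S"
  have kS: "k \<in> S" unfolding k_def using fin KS by (intro Max_in) auto
  have Kk: "K \<le> k" unfolding k_def using fin KS by simp
  have "Suc k \<notin> S" using fin k_def Max_ge not_less_eq_eq by blast
  then show ?thesis using kS Kk S_def by auto
qed

lemma inv_small:
  fixes x e :: real assumes e: "e > 0" and x: "x \<ge> 2/e" shows "1/(2*x) \<le> e/4"
proof -
  have xp: "x > 0" using e x by (smt (verit) divide_pos_pos)
  have "2 \<le> x * e" using x e by (simp add: divide_le_eq)
  then show ?thesis using xp e by (simp add: field_simps)
qed

theorem theorem4:
  fixes \<epsilon> :: real and f :: "nat \<Rightarrow> real"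
  assumes "\<epsilon> > 0" and "filterlim f at_top sequentially"
  shows "\<exists>(\<gamma>::nat) (L::nat \<Rightarrow> nat). \<gamma> > 1 \<and> (\<forall>n\<ge>1. L n > 1) \<and>
           filterlim L at_top sequentially \<and>
           limsup (\<lambda>q. ereal (real (complexity (rkB \<gamma> L) q) / real q)) < ereal (3/2 + \<epsilon>) \<and>
           (\<forall>n\<ge>2. real (complexity (rkB \<gamma> L) (length (rkB \<gamma> L n)))
                    < real (length (rkB \<gamma> L n)) + f (length (rkB \<gamma> L n)))"
proof -
  have e: "\<epsilon> > 0" and flim: "filterlim f at_top sequentially" using assms by auto
  define g where "g = nat \<lceil>2/\<epsilon>\<rceil> + 2"
  define L where "L = LL g f"
  have g1: "g > 1" and g1': "g \<ge> 1" unfolding g_def by auto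
  have gge: "real g \<ge> 2/\<epsilon>" unfolding g_def using real_nat_ceiling_ge[of "2/\<epsilon>"] by simp
  have Lpos: "\<forall>j. L j \<ge> 1" unfolding L_def using LL_ge by (metis le_add2 order_trans)
  have Lgt: "\<forall>n\<ge>1. L n > 1" unfolding L_def using LL_ge by (metis Suc_eq_plus1 Suc_le_lessD order_less_le_trans not_less_eq_eq le_add1 less_le_trans le_trans Suc_le_mono)
  have Ltop: "filterlim L at_top sequentially"
    unfolding filterlim_at_top eventually_sequentially
  proof (intro allI)
    fix Z :: nat
    show "\<exists>N. \<forall>n\<ge>N. Z \<le> L n"
    proof (intro exI[of _ Z] allI impI)
      fix n assume "Z \<le> n"
      then show "Z \<le> L n" unfolding L_def using LL_ge[where g=g and f=f and n=n] by simp
    qed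
  qed
  have lb: "length (blk g L j) = hh g f j" for j unfolding L_def by (rule len_blk)
  define K where "K = nat \<lceil>2/\<epsilon>\<rceil> + 1"
  have ev: "eventually (\<lambda>q. ereal (real (complexity (rkB g L) q) / real q) \<le> ereal (3/2 + \<epsilon>/2)) sequentially"
    unfolding eventually_sequentially
  proof (intro exI[of _ "hh g f K + 2"] allI impI)
    fix q assume q: "hh g f K + 2 \<le> q"
    then obtain k where k: "k \<ge> K" "hh g f k + 1 < q" "q \<le> hh g f (Suc k) + 1"
      using find_level[OF hh_strict[OF g1', where f=f], where K=K and q=q] by auto
    have k1: "k \<ge> 1" using k K_def by simp
    have R: "real (complexity (rkB g L) q) \<le> (3/2 + 1/(2*real (L k)) + 1/(2*(2*real g+1))) * real q"
    proof (rule ratio_level[OF Lpos g1' k1])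
      show "length (blk g L k) + 1 < q" unfolding lb by (rule k(2))
      show "q \<le> length (blk g L (Suc k)) + 1" unfolding lb by (rule k(3))
    qed
    have "real (L k) \<ge> real k + 1" unfolding L_def using LL_ge[where g=g and f=f and n=k] by simp
    moreover have "real k \<ge> 2/\<epsilon>" using k(1) K_def real_nat_ceiling_ge[of "2/\<epsilon>"] by simp
    ultimately have "1/(2*real (L k)) \<le> \<epsilon>/4" using e by (intro inv_small) auto
    moreover have "1/(2*(2*real g+1)) \<le> \<epsilon>/4"
    proof -
      have "2*real g + 1 \<ge> 2/\<epsilon>" using gge by simp
      then have "1/(2*(2*real g+1)) \<le> \<epsilon>/4" using e by (intro inv_small) auto
      then show ?thesis .
    qed
    ultimately have "(3/2 + 1/(2*real (L k)) + 1/(2*(2*real g+1))) \<le> 3/2 + \<epsilon>/2" by simp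
    then have "real (complexity (rkB g L) q) \<le> (3/2 + \<epsilon>/2) * real q"
      using R by (meson mult_right_mono of_nat_0_le_iff order_trans)
    moreover have "real q > 0" using q by simp
    ultimately have "real (complexity (rkB g L) q) / real q \<le> 3/2 + \<epsilon>/2"
      by (simp add: divide_le_eq)
    then show "ereal (real (complexity (rkB g L) q) / real q) \<le> ereal (3/2 + \<epsilon>/2)" by simp
  qed
  have "limsup (\<lambda>q. ereal (real (complexity (rkB g L) q) / real q)) \<le> ereal (3/2 + \<epsilon>/2)"
    by (rule Limsup_bounded[OF ev])
  also have "\<dots> < ereal (3/2 + \<epsilon>)" using e by simp
  finally have lim: "limsup (\<lambda>q. ereal (real (complexity (rkB g L) q) / real q)) < ereal (3/2 + \<epsilon>)" .
  have fc: "\<forall>n\<ge>2. real (complexity (rkB g L) (length (rkB g L n)))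
                    < real (length (rkB g L n)) + f (length (rkB g L n))"
  proof (intro allI impI)
    fix n :: nat assume n: "n \<ge> 2"
    then obtain k where nk: "n = Suc (Suc k)" by (metis add_2_eq_Suc le_Suc_ex)
    define ck where "ck = g*(hh g f k+1) + hh g f k"
    have rk: "rkB g L n = blk g L (Suc k)" unfolding rkB_def nk by simp
    define q where "q = length (blk g L (Suc k))"
    have qv: "q = LL g f (Suc k) * ck" unfolding q_def lb ck_def by (simp add: LL_Suc)
    have P: "complexity (rkB g L) q \<le> ck + q"
      using level_bounds(1)[OF Lpos g1', where q=q and k=k and hk="hh g f k" and ck=ck] q_def lb ck_def by simp
    have ck1: "ck \<ge> 1" unfolding ck_def using g1' by simp
    have "Msel f ck \<le> LL g f (Suc k)" unfolding LL_Suc ck_def by simp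
    also have "\<dots> \<le> q" unfolding qv using ck1 by simp
    finally have "f q > real ck" by (rule Msel[OF flim])
    then show "real (complexity (rkB g L) (length (rkB g L n)))
                    < real (length (rkB g L n)) + f (length (rkB g L n))"
      using P rk q_def by simp
  qed
  show ?thesis using g1 Lgt Ltop lim fc by blast
qed

end
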